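(* Let $B=(B_t)_{t\ge 0}$ be a standard Brownian motion with $B_0=0$ and let $c>0$. Define stopping times $(T_m)_{m\ge 0}$ and a process $U=(U_t)_{t\ge0}$ as follows. On the event $A$ that $B$ reaches $c$ before $-c$: $T_0=\inf\{t\ge0: B_t=c\}$; for $k\ge0$, $T_{2k+1}$ is the first time $t\ge T_{2k}$ with $B_t-\sup_{T_{2k}\le s\le t}B_s=-2c$, and $T_{2k+2}$ is the first time $t\ge T_{2k+1}$ with $B_t-\inf_{T_{2k+1}\le s\le t}B_s=2c$. Set $U_t=0$ for $0\le t\le T_0$; $U_t=\sup_{T_{2k}\le s\le t}B_s-c$ for $T_{2k}<t\le T_{2k+1}$; $U_t=\inf_{T_{2k+1}\le s\le t}B_s+c$ for $T_{2k+1}<t\le T_{2k+2}$ ($k\ge 0$). On the complementary event $A^c$ ($B$ reaches $-c$ before $c$): $T_0=\inf\{t\ge0: B_t=-c\}$; for $k\ge0$, $T_{2k+1}$ is the first time $t\ge T_{2k}$ with $B_t-\inf_{T_{2k}\le s\le t}B_s=2c$, and $T_{2k+2}$ is the first time $t\ge T_{2k+1}$ with $B_t-\sup_{T_{2k+1}\le s\le t}B_s=-2c$. Set $U_t=0$ for $0\le t\le T_0$; $U_t=\inf_{T_{2k}\le s\le t}B_s+c$ for $T_{2k}<t\le T_{2k+1}$; $U_t=\sup_{T_{2k+1}\le s\le t}B_s-c$ for $T_{2k+1}<t\le T_{2k+2}$ ($k\ge0$). Then (almost surely) $U$ is the only continuous process with finite variation satisfying: (a) $U_0=0$; (b) $B_t-c\le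 U_t\le B_t+c$ for all $t\ge0$; (c) $U$ is nondecreasing on every interval on which $U<B+c$ strictly; (d) $U$ is nonincreasing on every interval on which $U>B-c$ strictly. (In particular $U$ is constant on intervals where $B-c<U<B+c$.)
   Context: Here $B_t$ models the logarithm of a reference market price $p=\exp B$, $U_t$ the logarithm of an automated-market-maker price, and $c=\log(\gamma^{-1})$ for a fee parameter $\gamma\in(0,1)$. The stopping times $T_m$ are almost surely finite for every $m$. *)

theory Defs
  imports "HOL-Probability.Probability"
begin

definition bounded_variation_on :: "(real \<Rightarrow> real) \<Rightarrow> real \<Rightarrow> real \<Rightarrow> bool" where
  "bounded_variation_on f a b \<longleftrightarrow>
     (\<exists>K. \<forall>xs::real list. sorted xs \<and> set xs \<subseteq> {a..b} \<longrightarrow>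
        (\<Sum>i<length xs - 1. \<bar>f (xs ! Suc i) - f (xs ! i)\<bar>) \<le> K)"

definition finite_variation :: "(real \<Rightarrow> real) \<Rightarrow> bool" where
  "finite_variation f \<longleftrightarrow> (\<forall>T\<ge>0. bounded_variation_on f 0 T)"

definition reaches_c_first :: "(real \<Rightarrow> real) \<Rightarrow> real \<Rightarrow> bool" where
  "reaches_c_first b c \<longleftrightarrow> (\<exists>t\<ge>0. b t = c \<and> (\<forall>s\<in>{0..t}. b s \<noteq> - c))"

definition hit_set :: "(real \<Rightarrow> real) \<Rightarrow> real \<Rightarrow> real set" where
  "hit_set b a = {t. 0 \<le> t \<and> b t = a}"

definition drawdown_set :: "(real \<Rightarrow> real) \<Rightarrow> real \<Rightarrow> real \<Rightarrow> real set" where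
  "drawdown_set b c T = {t. T \<le> t \<and> b t - Sup (b ` {T..t}) = - 2 * c}"

definition drawup_set :: "(real \<Rightarrow> real) \<Rightarrow> real \<Rightarrow> real \<Rightarrow> real set" where
  "drawup_set b c T = {t. T \<le> t \<and> b t - Inf (b ` {T..t}) = 2 * c}"

text \<open>The stopping times T_m. The flag up says whether we are on A.
  On A, the step from T_m to T_{m+1} is a drawdown step iff m is even;
  on the complement of A it is a drawdown step iff m is odd.\<close>
primrec Tseq :: "bool \<Rightarrow> (real \<Rightarrow> real) \<Rightarrow> real \<Rightarrow> nat \<Rightarrow> real" where
  "Tseq up b c 0 = Inf (hit_set b (if up then c else - c))"
| "Tseq up b c (Suc m) =
     (if even m = up then Inf (drawdown_set b c (Tseq up b c m))
      else Inf (drawup_set b c (Tseq up b c m)))"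

definition T :: "(real \<Rightarrow> real) \<Rightarrow> real \<Rightarrow> nat \<Rightarrow> real" where
  "T b c = Tseq (reaches_c_first b c) b c"

text \<open>All T_m are finite: each defining set is nonempty.\<close>
definition T_finite :: "(real \<Rightarrow> real) \<Rightarrow> real \<Rightarrow> bool" where
  "T_finite b c \<longleftrightarrow>
     (let up = reaches_c_first b c in
       hit_set b (if up then c else - c) \<noteq> {} \<and>
       (\<forall>m. (if even m = up then drawdown_set b c (T b c m)
              else drawup_set b c (T b c m)) \<noteq> {}))"

definition U :: "(real \<Rightarrow> real) \<Rightarrow> real \<Rightarrow> real \<Rightarrow> real" where
  "U b c t =
     (if t \<le> T b c 0 then 0
      else (let m = (THE m. T b c m < t \<and> t \<le> T b c (Suc m)) in
            if even m = reaches_c_first b c then Sup (b ` {T b c m..t}) - c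
            else Inf (b ` {T b c m..t}) + c))"

definition play_props :: "(real \<Rightarrow> real) \<Rightarrow> real \<Rightarrow> (real \<Rightarrow> real) \<Rightarrow> bool" where
  "play_props b c V \<longleftrightarrow>
     continuous_on {0..} V \<and> finite_variation V \<and>
     V 0 = 0 \<and>
     (\<forall>t\<ge>0. b t - c \<le> V t \<and> V t \<le> b t + c) \<and>
     (\<forall>s t. 0 \<le> s \<longrightarrow> (\<forall>r\<in>{s..t}. V r < b r + c) \<longrightarrow> mono_on {s..t} V) \<and>
     (\<forall>s t. 0 \<le> s \<longrightarrow> (\<forall>r\<in>{s..t}. V r > b r - c) \<longrightarrow> antimono_on {s..t} V)"

end

theory Submission
  imports Defs
begin

lemma bv_mono:
  assumes "mono_on {a..b} f" shows "bounded_variation_on f a b"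
  unfolding bounded_variation_on_def
proof (intro exI allI impI)
  fix xs :: "real list" assume xs: "sorted xs \<and> set xs \<subseteq> {a..b}"
  show "(\<Sum>i<length xs - 1. \<bar>f (xs ! Suc i) - f (xs ! i)\<bar>) \<le> \<bar>f b - f a\<bar>"
  proof (cases "length xs \<le> 1")
    case True then show ?thesis by simp
  next
    case False
    define n where "n = length xs - 1"
    have nl: "n < length xs" "Suc n = length xs" using False n_def by auto
    have mem: "\<And>i. i < length xs \<Longrightarrow> xs ! i \<in> {a..b}" using xs nth_mem by blast
    have srt: "\<And>i j. i \<le> j \<Longrightarrow> j < length xs \<Longrightarrow> xs ! i \<le> xs ! j"
      using xs sorted_iff_nth_mono by blast
    have "(\<Sum>i<n. \<bar>f (xs ! Suc i) - f (xs ! i)\<bar>) = (\<Sum>i<n. f (xs ! Suc i) - f (xs ! i))"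
    proof (rule sum.cong)
      fix i assume "i \<in> {..<n}"
      then have i: "Suc i < length xs" using nl by auto
      have "f (xs ! i) \<le> f (xs ! Suc i)"
        using assms mono_onD[OF assms mem[of i] mem[of "Suc i"]] i srt[of i "Suc i"] by auto
      then show "\<bar>f (xs ! Suc i) - f (xs ! i)\<bar> = f (xs ! Suc i) - f (xs ! i)" by simp
    qed simp
    also have "\<dots> = f (xs ! n) - f (xs ! 0)"
      using sum_lessThan_telescope[of "\<lambda>i. f (xs ! i)" n] by simp
    also have "\<dots> \<le> f b - f a"
    proof -
      have "xs ! n \<in> {a..b}" using mem nl by blast
      moreover have "xs ! 0 \<in> {a..b}" using mem nl by (metis zero_less_Suc)
      ultimately have "f (xs ! n) \<le> f b" "f a \<le> f (xs ! 0)"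
        using mono_onD[OF assms] by auto
      then show ?thesis by simp
    qed
    finally show ?thesis unfolding n_def by simp
  qed
qed

lemma bv_uminus: "bounded_variation_on (\<lambda>t. - f t) a b = bounded_variation_on f a b"
proof -
  have "\<And>x y. \<bar>- f y - - f x\<bar> = \<bar>f y - f x\<bar>" by simp
  then show ?thesis unfolding bounded_variation_on_def by simp
qed

lemma bv_antimono:
  assumes "antimono_on {a..b} f" shows "bounded_variation_on f a b"
proof -
  have "mono_on {a..b} (\<lambda>t. - f t)"
    using assms unfolding monotone_on_def by auto
  from bv_mono[OF this] show ?thesis using bv_uminus[of f a b] by simp
qed

lemma bv_add:
  assumes "bounded_variation_on f a b" "bounded_variation_on g a b"
  shows "bounded_variation_on (\<lambda>t. f t + g t) a b"
proof -
  obtain K1 where K1: "\<forall>xs::real list. sorted xs \<and> set xs \<subseteq> {a..b} \<longrightarrow>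
        (\<Sum>i<length xs - 1. \<bar>f (xs ! Suc i) - f (xs ! i)\<bar>) \<le> K1"
    using assms(1) unfolding bounded_variation_on_def by blast
  obtain K2 where K2: "\<forall>xs::real list. sorted xs \<and> set xs \<subseteq> {a..b} \<longrightarrow>
        (\<Sum>i<length xs - 1. \<bar>g (xs ! Suc i) - g (xs ! i)\<bar>) \<le> K2"
    using assms(2) unfolding bounded_variation_on_def by blast
  show ?thesis unfolding bounded_variation_on_def
  proof (intro exI allI impI)
    fix xs :: "real list" assume xs: "sorted xs \<and> set xs \<subseteq> {a..b}"
    have "(\<Sum>i<length xs - 1. \<bar>(f (xs ! Suc i) + g (xs ! Suc i)) - (f (xs ! i) + g (xs ! i))\<bar>)
        \<le> (\<Sum>i<length xs - 1. \<bar>f (xs ! Suc i) - f (xs ! i)\<bar> + \<bar>g (xs ! Suc i) - g (xs ! i)\<bar>)"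
      by (rule sum_mono) linarith
    also have "\<dots> \<le> K1 + K2" using K1 K2 xs by (simp add: sum.distrib add_mono)
    finally show "(\<Sum>i<length xs - 1. \<bar>(f (xs ! Suc i) + g (xs ! Suc i)) - (f (xs ! i) + g (xs ! i))\<bar>) \<le> K1 + K2" .
  qed
qed

lemma bv_cong:
  assumes "\<forall>t\<in>{a..b}. f t = g t" "bounded_variation_on f a b"
  shows "bounded_variation_on g a b"
proof -
  obtain K where K: "\<forall>xs::real list. sorted xs \<and> set xs \<subseteq> {a..b} \<longrightarrow>
        (\<Sum>i<length xs - 1. \<bar>f (xs ! Suc i) - f (xs ! i)\<bar>) \<le> K"
    using assms(2) unfolding bounded_variation_on_def by blast
  show ?thesis unfolding bounded_variation_on_def
  proof (intro exI allI impI)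
    fix xs :: "real list" assume xs: "sorted xs \<and> set xs \<subseteq> {a..b}"
    have "(\<Sum>i<length xs - 1. \<bar>g (xs ! Suc i) - g (xs ! i)\<bar>) = (\<Sum>i<length xs - 1. \<bar>f (xs ! Suc i) - f (xs ! i)\<bar>)"
    proof (rule sum.cong)
      fix i assume "i \<in> {..<length xs - 1}"
      then have "Suc i < length xs" "i < length xs" by auto
      then have "xs ! Suc i \<in> {a..b}" "xs ! i \<in> {a..b}" using xs nth_mem by blast+
      then show "\<bar>g (xs ! Suc i) - g (xs ! i)\<bar> = \<bar>f (xs ! Suc i) - f (xs ! i)\<bar>" using assms(1) by simp
    qed simp
    then show "(\<Sum>i<length xs - 1. \<bar>g (xs ! Suc i) - g (xs ! i)\<bar>) \<le> K" using K xs by simp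
  qed
qed

lemma bv_add_const: "bounded_variation_on (\<lambda>t. f t + k) a b = bounded_variation_on f a b"
  unfolding bounded_variation_on_def by simp

lemma bv_comp:
  assumes "bounded_variation_on f c d" "mono_on {a..b} h" "h ` {a..b} \<subseteq> {c..d}"
  shows "bounded_variation_on (\<lambda>t. f (h t)) a b"
proof -
  obtain K where K: "\<forall>xs::real list. sorted xs \<and> set xs \<subseteq> {c..d} \<longrightarrow>
        (\<Sum>i<length xs - 1. \<bar>f (xs ! Suc i) - f (xs ! i)\<bar>) \<le> K"
    using assms(1) unfolding bounded_variation_on_def by blast
  show ?thesis unfolding bounded_variation_on_def
  proof (intro exI allI impI)
    fix xs :: "real list" assume xs: "sorted xs \<and> set xs \<subseteq> {a..b}"
    have s: "sorted (map h xs)"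
      unfolding sorted_iff_nth_mono
    proof (intro allI impI)
      fix i j assume ij: "i \<le> j" "j < length (map h xs)"
      have l: "i < length xs" "j < length xs" using ij by auto
      have "xs ! i \<le> xs ! j" using xs ij l sorted_nth_mono by blast
      moreover have "xs ! i \<in> {a..b}" "xs ! j \<in> {a..b}" using l xs nth_mem by blast+
      ultimately have "h (xs ! i) \<le> h (xs ! j)" using mono_onD[OF assms(2)] by blast
      then show "map h xs ! i \<le> map h xs ! j" using l by simp
    qed
    have st: "set (map h xs) \<subseteq> {c..d}" using xs assms(3) by auto
    have "(\<Sum>i<length xs - 1. \<bar>f (h (xs ! Suc i)) - f (h (xs ! i))\<bar>)
        = (\<Sum>i<length (map h xs) - 1. \<bar>f (map h xs ! Suc i) - f (map h xs ! i)\<bar>)"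
      by (rule sum.cong) auto
    also have "\<dots> \<le> K" using K s st by blast
    finally show "(\<Sum>i<length xs - 1. \<bar>f (h (xs ! Suc i)) - f (h (xs ! i))\<bar>) \<le> K" .
  qed
qed

lemma bv_glue:
  assumes "a \<le> m" "m \<le> b" "bounded_variation_on f a m" "bounded_variation_on f m b"
  shows "bounded_variation_on f a b"
proof -
  have 1: "bounded_variation_on (\<lambda>t. f (min t m)) a b"
    by (rule bv_comp[OF assms(3)]) (auto simp: mono_on_def assms)
  have "bounded_variation_on (\<lambda>t. f (max t m)) a b"
    by (rule bv_comp[OF assms(4)]) (auto simp: mono_on_def assms)
  then have 2: "bounded_variation_on (\<lambda>t. f (max t m) + - f m) a b"
    using bv_add_const[of "\<lambda>t. f (max t m)" "- f m" a b] by simp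
  have "bounded_variation_on (\<lambda>t. f (min t m) + (f (max t m) + - f m)) a b"
    by (rule bv_add[OF 1 2])
  moreover have "(\<lambda>t. f (min t m) + (f (max t m) + - f m)) = f"
    by (rule ext) (simp add: min_def max_def)
  ultimately show ?thesis by simp
qed

lemma bv_sub:
  assumes "bounded_variation_on f a b" "a \<le> a'" "b' \<le> b"
  shows "bounded_variation_on f a' b'"
proof -
  obtain K where K: "\<forall>xs::real list. sorted xs \<and> set xs \<subseteq> {a..b} \<longrightarrow>
        (\<Sum>i<length xs - 1. \<bar>f (xs ! Suc i) - f (xs ! i)\<bar>) \<le> K"
    using assms(1) unfolding bounded_variation_on_def by blast
  have "{a'..b'} \<subseteq> {a..b}" using assms by auto
  then show ?thesis unfolding bounded_variation_on_def using K by (meson order_trans)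
qed


locale rsup =
  fixes g :: "real \<Rightarrow> real" and a :: real
  assumes gc: "continuous_on {a..} g"
begin

definition M :: "real \<Rightarrow> real" where "M t = Sup (g ` {a..t})"

lemma gc_sub: "S \<subseteq> {a..} \<Longrightarrow> continuous_on S g"
  using gc continuous_on_subset by blast

lemma bdd: "bdd_above (g ` {a..t})"
proof -
  have "continuous_on {a..t} g" by (rule gc_sub) auto
  then have "compact (g ` {a..t})" by (rule compact_continuous_image[OF _ compact_Icc])
  then show ?thesis by (intro bounded_imp_bdd_above compact_imp_bounded)
qed

lemma le_M: "a \<le> r \<Longrightarrow> r \<le> t \<Longrightarrow> g r \<le> M t"
  unfolding M_def by (rule cSup_upper[OF _ bdd]) auto

lemma M_le: "a \<le> t \<Longrightarrow> (\<And>r. a \<le> r \<Longrightarrow> r \<le> t \<Longrightarrow> g r \<le> K) \<Longrightarrow> M t \<le> K"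
  unfolding M_def by (rule cSup_least) auto

lemma M_attained: assumes "a \<le> t" shows "\<exists>r. a \<le> r \<and> r \<le> t \<and> M t = g r"
proof -
  have "continuous_on {a..t} g" by (rule gc_sub) auto
  then obtain r where r: "r \<in> {a..t}" "\<forall>y\<in>{a..t}. g y \<le> g r"
    using continuous_attains_sup[of "{a..t}" g] assms by auto
  have "M t \<le> g r" using r by (intro M_le assms) auto
  moreover have "g r \<le> M t" using r le_M by auto
  ultimately show ?thesis using r by auto
qed

lemma M_a: "M a = g a"
  using le_M[of a a] M_le[of a "g a"] by force

lemma M_mono: "a \<le> t \<Longrightarrow> t \<le> t' \<Longrightarrow> M t \<le> M t'"
  by (rule M_le) (auto intro: le_M)

lemma M_ge: "a \<le> t \<Longrightarrow> g t \<le> M t"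
  by (rule le_M) auto

lemma M_step:
  assumes "a \<le> t" "t \<le> t'" "\<And>r. t \<le> r \<Longrightarrow> r \<le> t' \<Longrightarrow> g r \<le> g t + e"
  shows "M t' \<le> M t + e"
proof -
  have e: "0 \<le> e" using assms(3)[of t] assms(2) by auto
  show ?thesis
  proof (rule M_le)
    show "a \<le> t'" using assms by auto
    fix r assume r: "a \<le> r" "r \<le> t'"
    show "g r \<le> M t + e"
    proof (cases "r \<le> t")
      case True then show ?thesis using le_M[of r t] r e by auto
    next
      case False then show ?thesis using assms(3)[of r] r M_ge[OF assms(1)] by auto
    qed
  qed
qed

lemma M_cont: "continuous_on {a..} M"
  unfolding continuous_on_iff
proof (intro ballI allI impI)
  fix x e :: real assume x: "x \<in> {a..}" and e: "0 < e"
  have e3: "e/3 > 0" using e by simp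
  have "\<forall>x\<in>{a..}. \<forall>e>0. \<exists>d>0. \<forall>y\<in>{a..}. dist y x < d \<longrightarrow> dist (g y) (g x) < e"
    using gc unfolding continuous_on_iff .
  then have "\<exists>d>0. \<forall>y\<in>{a..}. dist y x < d \<longrightarrow> dist (g y) (g x) < e/3"
    using x e3 by blast
  then obtain d where d: "d > 0" "\<And>y. y \<in> {a..} \<Longrightarrow> dist y x < d \<Longrightarrow> dist (g y) (g x) < e/3"
    by blast
  show "\<exists>d>0. \<forall>x'\<in>{a..}. dist x' x < d \<longrightarrow> dist (M x') (M x) < e"
  proof (intro exI conjI ballI impI)
    show "d > 0" by fact
    fix y assume y: "y \<in> {a..}" "dist y x < d"
    have yx: "\<bar>y - x\<bar> < d" using y(2) by (simp add: dist_real_def)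
    have near: "\<bar>g r - g x\<bar> < e/3" if r: "min x y \<le> r" "r \<le> max x y" for r
    proof -
      have "\<bar>r - x\<bar> < d"
      proof (cases "x \<le> y")
        case True then have "x \<le> r" "r \<le> y" using r by (auto simp: min_def max_def)
        then show ?thesis using yx by linarith
      next
        case False then have "y \<le> r" "r \<le> x" using r by (auto simp: min_def max_def)
        then show ?thesis using yx by linarith
      qed
      moreover have "r \<in> {a..}" using x y r by (auto simp: min_def max_def split: if_splits)
      ultimately have "dist (g r) (g x) < e/3" using d(2)[of r] by (simp add: dist_real_def)
      then show ?thesis by (simp add: dist_real_def)
    qed
    show "dist (M y) (M x) < e"
    proof (cases "x \<le> y")
      case True
      have "M y \<le> M x + e/3"
      proof (rule M_step)
        show "a \<le> x" using x by auto
        show "x \<le> y" by fact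
        fix r assume "x \<le> r" "r \<le> y"
        then have "\<bar>g r - g x\<bar> < e/3" using near[of r] True by (simp add: min_def max_def)
        then show "g r \<le> g x + e/3" by linarith
      qed
      moreover have "M x \<le> M y" using M_mono x True by auto
      ultimately show ?thesis using e by (simp add: dist_real_def)
    next
      case False
      have "M x \<le> M y + 2*e/3"
      proof (rule M_step)
        show "a \<le> y" "y \<le> x" using y False by auto
        fix r assume "y \<le> r" "r \<le> x"
        then have "\<bar>g r - g x\<bar> < e/3" "\<bar>g y - g x\<bar> < e/3"
          using near[of r] near[of y] False by (simp_all add: min_def max_def)
        then show "g r \<le> g y + 2 * e / 3" by linarith
      qed
      moreover have "M y \<le> M x" using M_mono y False by auto
      ultimately show ?thesis using e by (simp add: dist_real_def)
    qed
  qed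
qed

lemma M_const:
  assumes "a \<le> s" "s \<le> t" "\<And>r. s \<le> r \<Longrightarrow> r \<le> t \<Longrightarrow> g r < M r"
  shows "M t \<le> M s"
proof -
  have "continuous_on {s..t} g" by (rule gc_sub) (use assms in auto)
  then obtain p where p: "p \<in> {s..t}" "\<forall>y\<in>{s..t}. g y \<le> g p"
    using continuous_attains_sup[of "{s..t}" g] assms by auto
  have gp: "g p \<le> M s"
  proof (rule ccontr)
    assume "\<not> g p \<le> M s"
    then have "M p \<le> g p"
    proof -
      assume ne: "\<not> g p \<le> M s"
      show ?thesis
      proof (rule M_le)
        show "a \<le> p" using p assms by auto
        fix q assume q: "a \<le> q" "q \<le> p"
        show "g q \<le> g p"
        proof (cases "q \<le> s")
          case True then show ?thesis using le_M[of q s] q ne by auto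
        next
          case False then show ?thesis using p q by auto
        qed
      qed
    qed
    moreover have "g p < M p" using assms(3) p by auto
    ultimately show False by auto
  qed
  show ?thesis
  proof (rule M_le)
    show "a \<le> t" using assms by auto
    fix q assume q: "a \<le> q" "q \<le> t"
    show "g q \<le> M s"
    proof (cases "q \<le> s")
      case True then show ?thesis using le_M[of q s] q by auto
    next
      case False then have "q \<in> {s..t}" using q by auto
      then show ?thesis using p gp by (meson order_trans)
    qed
  qed
qed

end

locale phase = rsup +
  fixes c :: real
  assumes cpos: "c > 0" and ne: "drawdown_set g c a \<noteq> {}"
begin

definition Tn :: real where "Tn = Inf (drawdown_set g c a)"

lemma dd_eq: "drawdown_set g c a = {t \<in> {a..}. g t - M t = - 2 * c}"
  unfolding drawdown_set_def M_def by auto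

lemma dd_closed: "closed (drawdown_set g c a)"
proof -
  have "continuous_on {a..} (\<lambda>t. g t - M t)"
    using gc M_cont by (intro continuous_intros)
  then show ?thesis unfolding dd_eq
    by (rule continuous_closed_preimage_constant) auto
qed

lemma dd_bdd: "bdd_below (drawdown_set g c a)"
  unfolding drawdown_set_def by (auto intro: bdd_belowI)

lemma Tn_mem: "Tn \<in> drawdown_set g c a"
  unfolding Tn_def using closed_contains_Inf[OF ne dd_bdd dd_closed] .

lemma Tn_ge: "a \<le> Tn" and Tn_val: "g Tn - M Tn = - 2 * c"
  using Tn_mem unfolding dd_eq by auto

lemma Tn_gt: "a < Tn"
proof -
  have "Tn \<noteq> a" using Tn_val M_a cpos by auto
  then show ?thesis using Tn_ge by auto
qed

lemma Tn_least: "t \<in> drawdown_set g c a \<Longrightarrow> Tn \<le> t"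
  unfolding Tn_def by (rule cInf_lower[OF _ dd_bdd])

lemma gap_bounds:
  assumes "a \<le> t" "t \<le> Tn" shows "- 2 * c \<le> g t - M t" "g t - M t \<le> 0"
proof -
  show "g t - M t \<le> 0" using M_ge assms by auto
  show "- 2 * c \<le> g t - M t"
  proof (rule ccontr)
    assume "\<not> - 2 * c \<le> g t - M t"
    then have lt: "g t - M t < - 2 * c" by auto
    have "continuous_on {a..t} (\<lambda>t. g t - M t)"
    proof -
      have "continuous_on {a..t} g" by (rule gc_sub) auto
      moreover have "continuous_on {a..t} M" by (rule continuous_on_subset[OF M_cont]) auto
      ultimately show ?thesis by (intro continuous_intros)
    qed
    then obtain x where x: "a \<le> x" "x \<le> t" "g x - M x = - 2 * c"
      using IVT2'[of "\<lambda>t. g t - M t" t "- 2 * c" a] lt M_a cpos assms by auto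
    then have "x \<in> drawdown_set g c a" unfolding dd_eq by auto
    then have "Tn \<le> x" by (rule Tn_least)
    then have "x = Tn" "t = Tn" using x assms by auto
    then show False using lt Tn_val by auto
  qed
qed

lemma osc: "\<exists>r. a \<le> r \<and> r \<le> Tn \<and> g r - g Tn = 2 * c"
proof -
  obtain r where r: "a \<le> r" "r \<le> Tn" "M Tn = g r" using M_attained Tn_ge by blast
  have "g r - g Tn = 2 * c" using Tn_val r(3) by linarith
  then show ?thesis using r by blast
qed

end


locale path =
  fixes b :: "real \<Rightarrow> real" and c :: real
  assumes cont: "continuous_on {0..} b" and b0: "b 0 = 0" and cpos: "c > 0"
    and fin: "T_finite b c"
begin

abbreviation "up \<equiv> reaches_c_first b c"
abbreviation "TT \<equiv> T b c"

definition dd :: "nat \<Rightarrow> bool" where "dd m \<longleftrightarrow> (even m = up)"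
definition g :: "nat \<Rightarrow> real \<Rightarrow> real" where "g m = (if dd m then b else (\<lambda>t. - b t))"
definition Mm :: "nat \<Rightarrow> real \<Rightarrow> real" where "Mm m t = Sup (g m ` {TT m..t})"
definition Uph :: "nat \<Rightarrow> real \<Rightarrow> real" where
  "Uph m t = (if dd m then Mm m t - c else - (Mm m t - c))"

lemma dd_Suc: "dd (Suc m) \<longleftrightarrow> \<not> dd m"
  unfolding dd_def by auto

lemma drawup_eq: "drawup_set b c S = drawdown_set (\<lambda>t. - b t) c S"
  unfolding drawup_set_def drawdown_set_def Inf_real_def image_image by auto

lemma dd_ne: "drawdown_set (g m) c (TT m) \<noteq> {}"
proof -
  have "(if even m = up then drawdown_set b c (TT m) else drawup_set b c (TT m)) \<noteq> {}"
    using fin unfolding T_finite_def Let_def by blast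
  then show ?thesis unfolding g_def dd_def drawup_eq by (auto split: if_splits)
qed

lemma TT_Suc: "TT (Suc m) = Inf (drawdown_set (g m) c (TT m))"
  by (simp add: T_def g_def dd_def drawup_eq)

lemma g_cont: "S \<subseteq> {0..} \<Longrightarrow> continuous_on S (g m)"
proof -
  assume S: "S \<subseteq> {0..}"
  have "continuous_on S b" using continuous_on_subset[OF cont S] .
  then show ?thesis unfolding g_def by (auto intro: continuous_intros)
qed

lemma phase_m: "0 \<le> TT m \<Longrightarrow> phase (g m) (TT m) c"
  by unfold_locales (auto intro!: g_cont simp: cpos dd_ne)

definition v0 :: real where "v0 = (if up then c else - c)"

lemma hit_ne: "hit_set b v0 \<noteq> {}"
  using fin unfolding T_finite_def Let_def v0_def by blast

lemma TT0: "TT 0 = Inf (hit_set b v0)"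
  by (simp add: T_def v0_def)

lemma TT0_mem: "TT 0 \<in> hit_set b v0"
proof -
  have cl: "closed (hit_set b v0)"
  proof -
    have "hit_set b v0 = {t \<in> {0..}. b t = v0}" unfolding hit_set_def by auto
    then show ?thesis using continuous_closed_preimage_constant[OF cont] by auto
  qed
  have "bdd_below (hit_set b v0)" unfolding hit_set_def by (auto intro: bdd_belowI)
  then show ?thesis unfolding TT0 using closed_contains_Inf[OF hit_ne _ cl] by blast
qed

lemma TT0_ge: "0 \<le> TT 0" and TT0_val: "b (TT 0) = v0"
  using TT0_mem unfolding hit_set_def by auto

lemma TT0_least: "0 \<le> t \<Longrightarrow> b t = v0 \<Longrightarrow> TT 0 \<le> t"
proof -
  assume "0 \<le> t" "b t = v0"
  then have "t \<in> hit_set b v0" unfolding hit_set_def by auto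
  moreover have "bdd_below (hit_set b v0)" unfolding hit_set_def by (auto intro: bdd_belowI)
  ultimately show ?thesis unfolding TT0 by (rule cInf_lower)
qed

lemma TT_facts: "0 \<le> TT m \<and> TT m < TT (Suc m)"
proof (induction m)
  case 0
  interpret P: phase "g 0" "TT 0" c by (rule phase_m[OF TT0_ge])
  have "TT (Suc 0) = P.Tn" unfolding P.Tn_def by (rule TT_Suc)
  then show ?case using TT0_ge P.Tn_gt by auto
next
  case (Suc m)
  then have nn: "0 \<le> TT (Suc m)" by auto
  interpret P: phase "g (Suc m)" "TT (Suc m)" c by (rule phase_m[OF nn])
  have "TT (Suc (Suc m)) = P.Tn" unfolding P.Tn_def by (rule TT_Suc)
  then show ?case using nn P.Tn_gt by auto
qed

lemma TT_nonneg: "0 \<le> TT m" and TT_less: "TT m < TT (Suc m)"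
  using TT_facts by auto

lemma TT_strict: "m < n \<Longrightarrow> TT m < TT n"
  by (rule lift_Suc_mono_less[of TT]) (rule TT_less)

lemma TT_mono: "m \<le> n \<Longrightarrow> TT m \<le> TT n"
  by (rule lift_Suc_mono_le[of TT]) (simp add: TT_less less_imp_le)

lemma Mm_eq: "Mm m t = rsup.M (g m) (TT m) t"
proof -
  interpret P: phase "g m" "TT m" c by (rule phase_m[OF TT_nonneg])
  show ?thesis unfolding Mm_def P.M_def ..
qed

lemma PF:
  shows "continuous_on {TT m..} (Mm m)"
    and "TT m \<le> t \<Longrightarrow> t \<le> t' \<Longrightarrow> Mm m t \<le> Mm m t'"
    and "TT m \<le> t \<Longrightarrow> t \<le> TT (Suc m) \<Longrightarrow> - 2 * c \<le> g m t - Mm m t"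
    and "TT m \<le> t \<Longrightarrow> t \<le> TT (Suc m) \<Longrightarrow> g m t - Mm m t \<le> 0"
    and "Mm m (TT m) = g m (TT m)"
    and "g m (TT (Suc m)) - Mm m (TT (Suc m)) = - 2 * c"
    and "TT m \<le> s \<Longrightarrow> s \<le> t \<Longrightarrow> (\<And>r. s \<le> r \<Longrightarrow> r \<le> t \<Longrightarrow> g m r < Mm m r) \<Longrightarrow> Mm m t \<le> Mm m s"
    and "\<exists>r. TT m \<le> r \<and> r \<le> TT (Suc m) \<and> g m r - g m (TT (Suc m)) = 2 * c"
proof -
  interpret P: phase "g m" "TT m" c by (rule phase_m[OF TT_nonneg])
  have Tn: "TT (Suc m) = P.Tn" unfolding P.Tn_def by (rule TT_Suc)
  have MM: "Mm m = P.M" using Mm_eq by auto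
  show "continuous_on {TT m..} (Mm m)" unfolding MM by (rule P.M_cont)
  show "TT m \<le> t \<Longrightarrow> t \<le> t' \<Longrightarrow> Mm m t \<le> Mm m t'" unfolding MM by (rule P.M_mono)
  show "TT m \<le> t \<Longrightarrow> t \<le> TT (Suc m) \<Longrightarrow> - 2 * c \<le> g m t - Mm m t"
    unfolding MM Tn by (rule P.gap_bounds(1))
  show "TT m \<le> t \<Longrightarrow> t \<le> TT (Suc m) \<Longrightarrow> g m t - Mm m t \<le> 0"
    unfolding MM Tn by (rule P.gap_bounds(2))
  show "Mm m (TT m) = g m (TT m)" unfolding MM by (rule P.M_a)
  show "g m (TT (Suc m)) - Mm m (TT (Suc m)) = - 2 * c" unfolding MM Tn by (rule P.Tn_val)
  show "TT m \<le> s \<Longrightarrow> s \<le> t \<Longrightarrow> (\<And>r. s \<le> r \<Longrightarrow> r \<le> t \<Longrightarrow> g m r < Mm m r) \<Longrightarrow> Mm m t \<le> Mm m s"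
    unfolding MM by (rule P.M_const)
  show "\<exists>r. TT m \<le> r \<and> r \<le> TT (Suc m) \<and> g m r - g m (TT (Suc m)) = 2 * c"
    unfolding Tn by (rule P.osc)
qed

lemma TT_unbounded: "\<exists>n. t < TT n"
proof (rule ccontr)
  assume "\<not> (\<exists>n. t < TT n)"
  then have le: "\<And>n. TT n \<le> t" by (simp add: not_less)
  have bdd: "bdd_above (range TT)" using le by (intro bdd_aboveI[of _ t]) auto
  have inc: "incseq TT" using TT_mono by (simp add: incseq_def)
  define L where "L = (SUP n. TT n)"
  have lim: "TT \<longlonglongrightarrow> L" unfolding L_def by (rule LIMSEQ_incseq_SUP[OF bdd inc])
  have leL: "\<And>n. TT n \<le> L" unfolding L_def by (rule cSUP_upper[OF _ bdd]) auto
  have L0: "0 \<le> L" using leL[of 0] TT_nonneg[of 0] by linarith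
  have "\<forall>x\<in>{0..}. \<forall>e>0. \<exists>d>0. \<forall>y\<in>{0..}. dist y x < d \<longrightarrow> dist (b y) (b x) < e"
    using cont unfolding continuous_on_iff .
  then have "\<exists>d>0. \<forall>y\<in>{0..}. dist y L < d \<longrightarrow> dist (b y) (b L) < c"
    using L0 cpos by auto
  then obtain d where d: "d > 0" "\<And>y. y \<in> {0..} \<Longrightarrow> dist y L < d \<Longrightarrow> dist (b y) (b L) < c"
    by blast
  have "eventually (\<lambda>n. L - d < TT n) sequentially"
    using order_tendstoD(1)[OF lim, of "L - d"] d by auto
  then obtain N where N: "\<And>n. n \<ge> N \<Longrightarrow> L - d < TT n" unfolding eventually_sequentially by blast
  obtain r where r: "TT N \<le> r" "r \<le> TT (Suc N)" "g N r - g N (TT (Suc N)) = 2 * c"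
    using PF(8) by blast
  have a1: "\<bar>b r - b (TT (Suc N))\<bar> = 2 * c" using r(3) cpos unfolding g_def by (auto split: if_splits)
  have "r \<in> {0..}" "dist r L < d" using r N[of N] TT_nonneg[of N] leL[of "Suc N"]
    by (auto simp: dist_real_def)
  then have a2: "\<bar>b r - b L\<bar> < c" using d(2) by (simp add: dist_real_def)
  have "TT (Suc N) \<in> {0..}" "dist (TT (Suc N)) L < d" using N[of "Suc N"] TT_nonneg leL[of "Suc N"]
    by (auto simp: dist_real_def)
  then have a3: "\<bar>b (TT (Suc N)) - b L\<bar> < c" using d(2) by (simp add: dist_real_def)
  show False using a1 a2 a3 by linarith
qed

lemma find_phase_aux: "t \<le> TT n \<Longrightarrow> TT 0 < t \<Longrightarrow> \<exists>m. TT m < t \<and> t \<le> TT (Suc m)"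
proof (induction n)
  case 0 then show ?case by auto
next
  case (Suc n) then show ?case by (cases "t \<le> TT n") (auto simp: not_le)
qed

lemma find_phase: "TT 0 < t \<Longrightarrow> \<exists>m. TT m < t \<and> t \<le> TT (Suc m)"
  using TT_unbounded[of t] find_phase_aux less_imp_le by blast

lemma phase_unique:
  assumes "TT m < t" "t \<le> TT (Suc m)" "TT m' < t" "t \<le> TT (Suc m')"
  shows "m' = m"
proof (rule ccontr)
  assume "m' \<noteq> m"
  then consider "m < m'" | "m' < m" by linarith
  then show False
  proof cases
    case 1 then have "TT (Suc m) \<le> TT m'" by (intro TT_mono) auto
    then show False using assms by auto
  next
    case 2 then have "TT (Suc m') \<le> TT m" by (intro TT_mono) auto
    then show False using assms by auto
  qed
qed

lemma U_0: "t \<le> TT 0 \<Longrightarrow> U b c t = 0"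
  unfolding U_def by simp

lemma U_in:
  assumes "TT m < t" "t \<le> TT (Suc m)"
  shows "U b c t = Uph m t"
proof -
  have t0: "\<not> t \<le> TT 0" using assms TT_mono[of 0 m] by auto
  have the: "(THE m. TT m < t \<and> t \<le> TT (Suc m)) = m"
    using assms phase_unique by (intro the_equality) auto
  show ?thesis
    unfolding U_def using t0 the
    by (simp add: Let_def Uph_def Mm_def g_def dd_def Inf_real_def image_image)
qed

lemma Uph_start: "Uph m (TT m) = (if dd m then b (TT m) - c else b (TT m) + c)"
  using PF(5)[of m] unfolding Uph_def g_def by auto

lemma Uph_end: "Uph m (TT (Suc m)) = (if dd m then b (TT (Suc m)) + c else b (TT (Suc m)) - c)"
  using PF(6)[of m] unfolding Uph_def g_def by (auto split: if_splits)

lemma Uph0: "Uph 0 (TT 0) = 0"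
  using Uph_start[of 0] TT0_val unfolding v0_def dd_def by auto

lemma U_eq:
  assumes "TT m \<le> t" "t \<le> TT (Suc m)"
  shows "U b c t = Uph m t"
proof (cases "t = TT m")
  case True
  show ?thesis
  proof (cases m)
    case 0 then show ?thesis using True U_0 Uph0 by auto
  next
    case (Suc k)
    have "U b c t = Uph k t" using True Suc TT_less[of k] by (intro U_in) auto
    also have "\<dots> = Uph m t" using True Suc Uph_end[of k] Uph_start[of "Suc k"] dd_Suc[of k] by auto
    finally show ?thesis .
  qed
next
  case False then show ?thesis using assms U_in by auto
qed

end


lemma mono_glue:
  fixes f :: "real \<Rightarrow> real"
  assumes "a \<le> m" "m \<le> b" "mono_on {a..m} f" "mono_on {m..b} f"
  shows "mono_on {a..b} f"
proof (rule mono_onI)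
  fix x y assume xy: "x \<in> {a..b}" "y \<in> {a..b}" "x \<le> y"
  show "f x \<le> f y"
  proof (cases "y \<le> m")
    case True then show ?thesis using xy mono_onD[OF assms(3)] by auto
  next
    case False
    show ?thesis
    proof (cases "m \<le> x")
      case True then show ?thesis using xy mono_onD[OF assms(4)] by auto
    next
      case False
      then have "f x \<le> f m" using xy assms mono_onD[OF assms(3)] by auto
      moreover have "f m \<le> f y" using xy assms \<open>\<not> y \<le> m\<close> mono_onD[OF assms(4)] by auto
      ultimately show ?thesis by linarith
    qed
  qed
qed

lemma antimono_glue:
  fixes f :: "real \<Rightarrow> real"
  assumes "a \<le> m" "m \<le> b" "antimono_on {a..m} f" "antimono_on {m..b} f"
  shows "antimono_on {a..b} f"
proof -
  have "mono_on {a..m} (\<lambda>t. - f t)" "mono_on {m..b} (\<lambda>t. - f t)"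
    using assms(3,4) unfolding monotone_on_def by auto
  then have "mono_on {a..b} (\<lambda>t. - f t)" using mono_glue assms(1,2) by blast
  then show ?thesis unfolding monotone_on_def by auto
qed

context path
begin

lemma cont_sub: "S \<subseteq> {0..} \<Longrightarrow> continuous_on S b"
  using continuous_on_subset[OF cont] .

lemma b_bounds0:
  assumes t: "0 \<le> t" "t \<le> TT 0"
  shows "- c \<le> b t \<and> b t \<le> c"
proof -
  have ct: "continuous_on {0..t} b" by (rule cont_sub) auto
  show ?thesis
  proof (cases up)
    case True
    then have v: "v0 = c" unfolding v0_def by simp
    have 1: "b t \<le> c"
    proof (rule ccontr)
      assume "\<not> b t \<le> c"
      then obtain x where x: "0 \<le> x" "x \<le> t" "b x = c"
        using IVT'[of b 0 c t] ct b0 cpos t by auto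
      then have "TT 0 \<le> x" using TT0_least v by auto
      then have "x = t" using x t by linarith
      then show False using x \<open>\<not> b t \<le> c\<close> by simp
    qed
    from True obtain ts where ts: "ts \<ge> 0" "b ts = c" "\<forall>s\<in>{0..ts}. b s \<noteq> - c"
      unfolding reaches_c_first_def by blast
    have "TT 0 \<le> ts" using TT0_least ts v by auto
    have 2: "- c \<le> b t"
    proof (rule ccontr)
      assume "\<not> - c \<le> b t"
      then obtain x where x: "0 \<le> x" "x \<le> t" "b x = - c"
        using IVT2'[of b t "- c" 0] ct b0 cpos t by auto
      then show False using ts \<open>TT 0 \<le> ts\<close> t by auto
    qed
    show ?thesis using 1 2 by auto
  next
    case False
    then have v: "v0 = - c" unfolding v0_def by simp
    have 2: "- c \<le> b t"
    proof (rule ccontr)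
      assume "\<not> - c \<le> b t"
      then obtain x where x: "0 \<le> x" "x \<le> t" "b x = - c"
        using IVT2'[of b t "- c" 0] ct b0 cpos t by auto
      then have "TT 0 \<le> x" using TT0_least v by auto
      then have "x = t" using x t by linarith
      then show False using x \<open>\<not> - c \<le> b t\<close> by simp
    qed
    have 1: "b t \<le> c"
    proof (rule ccontr)
      assume "\<not> b t \<le> c"
      then obtain x where x: "0 \<le> x" "x \<le> t" "b x = c"
        using IVT'[of b 0 c t] ct b0 cpos t by auto
      have "\<forall>s\<in>{0..x}. b s \<noteq> - c"
      proof
        fix s assume s: "s \<in> {0..x}"
        show "b s \<noteq> - c"
        proof
          assume "b s = - c"
          then have "TT 0 \<le> s" using TT0_least v s by auto
          then have "s = x" using s x t by auto
          then show False using \<open>b s = - c\<close> x cpos by auto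
        qed
      qed
      then have up using x unfolding reaches_c_first_def by blast
      then show False using False by simp
    qed
    show ?thesis using 1 2 by auto
  qed
qed

lemma Uph_fun: "Uph m = (\<lambda>t. if dd m then Mm m t - c else - (Mm m t - c))"
  by (rule ext) (simp add: Uph_def)

lemma U_cont_phase: "continuous_on {TT m..TT (Suc m)} (U b c)"
proof -
  have "continuous_on {TT m..TT (Suc m)} (Mm m)" by (rule continuous_on_subset[OF PF(1)]) auto
  then have "continuous_on {TT m..TT (Suc m)} (Uph m)"
    unfolding Uph_fun by (cases "dd m") (auto intro!: continuous_intros)
  moreover have "continuous_on {TT m..TT (Suc m)} (Uph m) = continuous_on {TT m..TT (Suc m)} (U b c)"
    by (rule continuous_on_cong[OF refl]) (use U_eq[of m] in auto)
  ultimately show ?thesis by simp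
qed

lemma U_bounds_phase:
  assumes "TT m \<le> t" "t \<le> TT (Suc m)"
  shows "b t - c \<le> U b c t \<and> U b c t \<le> b t + c"
  using U_eq[OF assms] PF(3)[OF assms] PF(4)[OF assms]
  unfolding Uph_def g_def by (cases "dd m") auto

lemma U_mono_phase: "dd m \<Longrightarrow> mono_on {TT m..TT (Suc m)} (U b c)"
proof (rule mono_onI)
  fix r s assume "dd m" "r \<in> {TT m..TT (Suc m)}" "s \<in> {TT m..TT (Suc m)}" "r \<le> s"
  then show "U b c r \<le> U b c s" using U_eq[of m r] U_eq[of m s] PF(2)[of m r s] by (auto simp: Uph_def)
qed

lemma U_anti_phase: "\<not> dd m \<Longrightarrow> antimono_on {TT m..TT (Suc m)} (U b c)"
  unfolding monotone_on_def
proof (intro ballI impI)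
  fix r s assume "\<not> dd m" "r \<in> {TT m..TT (Suc m)}" "s \<in> {TT m..TT (Suc m)}" "r \<le> s"
  then show "U b c s \<le> U b c r" using U_eq[of m r] U_eq[of m s] PF(2)[of m r s] by (auto simp: Uph_def)
qed

lemma U_const_phase:
  assumes "TT m \<le> s" "s \<le> t" "t \<le> TT (Suc m)" "\<And>r. s \<le> r \<Longrightarrow> r \<le> t \<Longrightarrow> g m r < Mm m r"
    and u: "s \<le> u" "u \<le> t"
  shows "U b c u = U b c s"
proof -
  have "Mm m t \<le> Mm m s" by (rule PF(7)) (use assms in auto)
  moreover have "Mm m s \<le> Mm m u" "Mm m u \<le> Mm m t" using PF(2) assms by auto
  ultimately have "Mm m u = Mm m s" by auto
  moreover have "U b c u = Uph m u" "U b c s = Uph m s" using U_eq[of m u] U_eq[of m s] assms by auto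
  ultimately show ?thesis unfolding Uph_def by auto
qed

lemma const_mono:
  fixes f :: "real \<Rightarrow> real"
  assumes "\<And>u. s \<le> u \<Longrightarrow> u \<le> t \<Longrightarrow> f u = f s"
  shows "mono_on {s..t} f" "antimono_on {s..t} f"
proof -
  have eq: "f x = f y" if "x \<in> {s..t}" "y \<in> {s..t}" for x y
  proof -
    have "f x = f s" "f y = f s" using that by (intro assms; simp)+
    then show ?thesis by simp
  qed
  show "mono_on {s..t} f" "antimono_on {s..t} f"
    unfolding monotone_on_def using eq by (metis order_refl)+
qed

lemma U_c_phase:
  assumes "TT m \<le> s" "t \<le> TT (Suc m)" "\<forall>r\<in>{s..t}. U b c r < b r + c"
  shows "mono_on {s..t} (U b c)"
proof (cases "s \<le> t")
  case False then show ?thesis unfolding monotone_on_def by auto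
next
  case st: True
  show ?thesis
  proof (cases "dd m")
    case True
    then show ?thesis using U_mono_phase[OF True] assms
      by (rule_tac monotone_on_subset) auto
  next
    case False
    have "g m r < Mm m r" if "s \<le> r" "r \<le> t" for r
    proof -
      have "U b c r = Uph m r" using U_eq[of m r] assms that by auto
      moreover have "U b c r < b r + c" using assms(3) that by auto
      ultimately show ?thesis using False unfolding Uph_def g_def by auto
    qed
    then show ?thesis using U_const_phase[OF assms(1) st assms(2)] const_mono(1) by blast
  qed
qed

lemma U_d_phase:
  assumes "TT m \<le> s" "t \<le> TT (Suc m)" "\<forall>r\<in>{s..t}. U b c r > b r - c"
  shows "antimono_on {s..t} (U b c)"
proof (cases "s \<le> t")
  case False then show ?thesis unfolding monotone_on_def by auto
next
  case st: True
  show ?thesis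
  proof (cases "dd m")
    case False
    then show ?thesis using U_anti_phase[OF False] assms
      by (rule_tac monotone_on_subset) auto
  next
    case True
    have "g m r < Mm m r" if "s \<le> r" "r \<le> t" for r
    proof -
      have "U b c r = Uph m r" using U_eq[of m r] assms that by auto
      moreover have "U b c r > b r - c" using assms(3) that by auto
      ultimately show ?thesis using True unfolding Uph_def g_def by auto
    qed
    then show ?thesis using U_const_phase[OF assms(1) st assms(2)] const_mono(2) by blast
  qed
qed

lemma U_zero_on: "\<And>x. x \<in> {0..TT 0} \<Longrightarrow> U b c x = 0"
  using U_0 by auto

lemma G_cont: "continuous_on {0..TT n} (U b c)"
proof (induction n)
  case 0
  have "continuous_on {0..TT 0} (\<lambda>_. 0::real)" by (rule continuous_on_const)
  moreover have "continuous_on {0..TT 0} (\<lambda>_. 0::real) = continuous_on {0..TT 0} (U b c)"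
    by (rule continuous_on_cong[OF refl]) (use U_zero_on in auto)
  ultimately show ?case by simp
next
  case (Suc n)
  have "{0..TT (Suc n)} = {0..TT n} \<union> {TT n..TT (Suc n)}"
    using TT_nonneg[of n] TT_less[of n] by auto
  then show ?case using continuous_on_closed_Un[OF _ _ Suc U_cont_phase[of n]] by auto
qed

lemma G_bv: "bounded_variation_on (U b c) 0 (TT n)"
proof (induction n)
  case 0
  have "mono_on {0..TT 0} (U b c)" using U_zero_on unfolding monotone_on_def by auto
  then show ?case by (rule bv_mono)
next
  case (Suc n)
  have "bounded_variation_on (U b c) (TT n) (TT (Suc n))"
    using U_mono_phase[of n] U_anti_phase[of n] bv_mono bv_antimono by (cases "dd n") auto
  then show ?case using bv_glue[OF TT_nonneg[of n] less_imp_le[OF TT_less[of n]] Suc] by blast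
qed

lemma G_c: "0 \<le> s \<Longrightarrow> t \<le> TT n \<Longrightarrow> \<forall>r\<in>{s..t}. U b c r < b r + c \<Longrightarrow> mono_on {s..t} (U b c)"
proof (induction n arbitrary: s t)
  case 0
  then show ?case using U_zero_on unfolding monotone_on_def by auto
next
  case (Suc n)
  show ?case
  proof (cases "t \<le> TT n")
    case True then show ?thesis using Suc by blast
  next
    case tn: False
    show ?thesis
    proof (cases "TT n \<le> s")
      case True then show ?thesis using U_c_phase Suc.prems by blast
    next
      case False
      have "mono_on {s..TT n} (U b c)" using Suc.IH[of s "TT n"] Suc.prems tn by auto
      moreover have "mono_on {TT n..t} (U b c)" using U_c_phase[of n "TT n" t] Suc.prems tn False by auto
      ultimately show ?thesis using mono_glue[of s "TT n" t] tn False by auto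
    qed
  qed
qed

lemma G_d: "0 \<le> s \<Longrightarrow> t \<le> TT n \<Longrightarrow> \<forall>r\<in>{s..t}. U b c r > b r - c \<Longrightarrow> antimono_on {s..t} (U b c)"
proof (induction n arbitrary: s t)
  case 0
  then show ?case using U_zero_on unfolding monotone_on_def by auto
next
  case (Suc n)
  show ?case
  proof (cases "t \<le> TT n")
    case True then show ?thesis using Suc by blast
  next
    case tn: False
    show ?thesis
    proof (cases "TT n \<le> s")
      case True then show ?thesis using U_d_phase Suc.prems by blast
    next
      case False
      have "antimono_on {s..TT n} (U b c)" using Suc.IH[of s "TT n"] Suc.prems tn by auto
      moreover have "antimono_on {TT n..t} (U b c)" using U_d_phase[of n "TT n" t] Suc.prems tn False by auto
      ultimately show ?thesis using antimono_glue[of s "TT n" t] tn False by auto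
    qed
  qed
qed

lemma U_play: "play_props b c (U b c)"
  unfolding play_props_def
proof (intro conjI allI impI)
  show "continuous_on {0..} (U b c)"
    unfolding continuous_on_eq_continuous_within
  proof
    fix x :: real assume x: "x \<in> {0..}"
    obtain n where n: "x < TT n" using TT_unbounded by blast
    have "continuous (at x within {0..TT n}) (U b c)"
      using G_cont[of n] x n unfolding continuous_on_eq_continuous_within by auto
    moreover have "at x within {0..} = at x within {0..TT n}"
      by (rule at_within_nhd[of x "{..<TT n}"]) (use n in auto)
    ultimately show "continuous (at x within {0..}) (U b c)" by simp
  qed
  show "finite_variation (U b c)"
    unfolding finite_variation_def
  proof (intro allI impI)
    fix T0 :: real assume "0 \<le> T0"
    obtain n where n: "T0 < TT n" using TT_unbounded by blast
    show "bounded_variation_on (U b c) 0 T0" using bv_sub[OF G_bv[of n]] n by auto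
  qed
  show "U b c 0 = 0" using U_0 TT0_ge by auto
  fix t :: real assume t: "0 \<le> t"
  have "b t - c \<le> U b c t \<and> U b c t \<le> b t + c"
  proof (cases "t \<le> TT 0")
    case True then show ?thesis using U_0[OF True] b_bounds0[OF t True] by auto
  next
    case False
    then obtain m where "TT m < t" "t \<le> TT (Suc m)" using find_phase by force
    then show ?thesis using U_bounds_phase[of m t] by auto
  qed
  then show "b t - c \<le> U b c t" "U b c t \<le> b t + c" by auto
next
  fix s t :: real assume s: "0 \<le> s" and h: "\<forall>r\<in>{s..t}. U b c r < b r + c"
  obtain n where n: "t < TT n" using TT_unbounded by blast
  show "mono_on {s..t} (U b c)" by (rule G_c[of s t n]) (use s h n in auto)
next
  fix s t :: real assume s: "0 \<le> s" and h: "\<forall>r\<in>{s..t}. U b c r > b r - c"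
  obtain n where n: "t < TT n" using TT_unbounded by blast
  show "antimono_on {s..t} (U b c)" by (rule G_d[of s t n]) (use s h n in auto)
qed

end

lemma play_le:
  assumes V: "play_props b c V" and W: "play_props b c W" and t1: "0 \<le> t1"
  shows "W t1 \<le> V t1"
proof (rule ccontr)
  assume "\<not> W t1 \<le> V t1"
  then have lt: "V t1 < W t1" by simp
  have Vc: "continuous_on {0..} V" and V0: "V 0 = 0"
    and Vb: "\<And>t. 0 \<le> t \<Longrightarrow> b t - c \<le> V t \<and> V t \<le> b t + c"
    and Vm: "\<And>s t. 0 \<le> s \<Longrightarrow> (\<forall>r\<in>{s..t}. V r < b r + c) \<Longrightarrow> mono_on {s..t} V"
    using V unfolding play_props_def by auto
  have Wc: "continuous_on {0..} W" and W0: "W 0 = 0"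
    and Wb: "\<And>t. 0 \<le> t \<Longrightarrow> b t - c \<le> W t \<and> W t \<le> b t + c"
    and Wm: "\<And>s t. 0 \<le> s \<Longrightarrow> (\<forall>r\<in>{s..t}. W r > b r - c) \<Longrightarrow> antimono_on {s..t} W"
    using W unfolding play_props_def by auto
  have Vc1: "continuous_on {0..t1} V" and Wc1: "continuous_on {0..t1} W"
    using continuous_on_subset[OF Vc] continuous_on_subset[OF Wc] by auto
  define S where "S = {0..t1} \<inter> (\<lambda>r. W r - V r) -` {..0}"
  have clS: "closed S" unfolding S_def
    by (rule continuous_closed_preimage) (auto intro!: continuous_intros Vc1 Wc1)
  have S0: "0 \<in> S" unfolding S_def using t1 V0 W0 by auto
  have bS: "bdd_above S" unfolding S_def by (auto intro: bdd_aboveI[of _ t1])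
  define s where "s = Sup S"
  have sS: "s \<in> S" unfolding s_def using closed_contains_Sup[OF _ bS clS] S0 by auto
  then have s0: "0 \<le> s" "s \<le> t1" "W s \<le> V s" unfolding S_def by auto
  have st: "s < t1" using s0 sS lt unfolding S_def by (cases "s = t1") auto
  have after: "V r < W r" if "s < r" "r \<le> t1" for r
  proof (rule ccontr)
    assume "\<not> V r < W r"
    then have "r \<in> S" unfolding S_def using that s0 by auto
    then have "r \<le> s" unfolding s_def by (rule cSup_upper[OF _ bS])
    then show False using that by auto
  qed
  have key: "V s' \<le> V t1 \<and> W t1 \<le> W s'" if s': "s < s'" "s' \<le> t1" for s'
  proof -
    have "\<forall>r\<in>{s'..t1}. V r < b r + c"
    proof
      fix r assume r: "r \<in> {s'..t1}"
      then have "V r < W r" using after s' by auto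
      moreover have "W r \<le> b r + c" using Wb[of r] r s' s0 by auto
      ultimately show "V r < b r + c" by auto
    qed
    then have "mono_on {s'..t1} V" using Vm[of s' t1] s' s0 by auto
    then have 1: "V s' \<le> V t1" using s' by (auto simp: monotone_on_def)
    have "\<forall>r\<in>{s'..t1}. W r > b r - c"
    proof
      fix r assume r: "r \<in> {s'..t1}"
      then have "V r < W r" using after s' by auto
      moreover have "b r - c \<le> V r" using Vb[of r] r s' s0 by auto
      ultimately show "W r > b r - c" by auto
    qed
    then have "antimono_on {s'..t1} W" using Wm[of s' t1] s' s0 by auto
    then have 2: "W t1 \<le> W s'" using s' by (auto simp: monotone_on_def)
    show ?thesis using 1 2 by auto
  qed
  have cV: "continuous_on {s..t1} V" and cW: "continuous_on {s..t1} W"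
    using continuous_on_subset[OF Vc1] continuous_on_subset[OF Wc1] s0 by auto
  have C1: "closed ({s..t1} \<inter> V -` {..V t1})"
    by (rule continuous_closed_preimage[OF cV]) auto
  have C2: "closed ({s..t1} \<inter> W -` {W t1..})"
    by (rule continuous_closed_preimage[OF cW]) auto
  have sc: "s \<in> closure {s<..t1}" using closure_greaterThanAtMost[OF st] st by auto
  have "closure {s<..t1} \<subseteq> {s..t1} \<inter> V -` {..V t1}"
    by (rule closure_minimal[OF _ C1]) (use key in auto)
  then have "s \<in> V -` {..V t1}" using sc by blast
  then have "V s \<le> V t1" by simp
  have "closure {s<..t1} \<subseteq> {s..t1} \<inter> W -` {W t1..}"
    by (rule closure_minimal[OF _ C2]) (use key in auto)
  then have "s \<in> W -` {W t1..}" using sc by blast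
  then have "W t1 \<le> W s" by simp
  show False using \<open>V s \<le> V t1\<close> \<open>W t1 \<le> W s\<close> lt s0(3) by auto
qed

theorem proposition2p1:
  fixes M :: "'a measure" and B :: "real \<Rightarrow> 'a \<Rightarrow> real" and c :: real
  assumes "prob_space M"
    and "c > 0"
    and "AE \<omega> in M. continuous_on {0..} (\<lambda>t. B t \<omega>) \<and> B 0 \<omega> = 0"
    and "AE \<omega> in M. T_finite (\<lambda>t. B t \<omega>) c"
  shows "AE \<omega> in M. play_props (\<lambda>t. B t \<omega>) c (U (\<lambda>t. B t \<omega>) c) \<and>
           (\<forall>V. play_props (\<lambda>t. B t \<omega>) c V \<longrightarrow> (\<forall>t\<ge>0. V t = U (\<lambda>t. B t \<omega>) c t))"
  using assms(3,4)
proof eventually_elim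
  case (elim \<omega>)
  interpret P: path "\<lambda>t. B t \<omega>" c using elim assms(2) by unfold_locales auto
  have Up: "play_props (\<lambda>t. B t \<omega>) c (U (\<lambda>t. B t \<omega>) c)" by (rule P.U_play)
  show ?case
  proof (intro conjI allI impI)
    show "play_props (\<lambda>t. B t \<omega>) c (U (\<lambda>t. B t \<omega>) c)" by (rule Up)
    fix V t assume "play_props (\<lambda>t. B t \<omega>) c V" "0 \<le> (t::real)"
    then show "V t = U (\<lambda>t. B t \<omega>) c t"
      using play_le[OF Up] play_le[OF _ Up] by (meson order_antisym)
  qed
qed

end
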